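(* Let $F=\{T_1,\dots,T_m\}$ be a random forest on $X_n$ and $\vec x\in\{0,1\}^n$ an instance with $F(\vec x)=1$. Let $y_1,\dots,y_m$ be fresh variables, and consider the Partial MaxSAT instance $(C_{\mathrm{soft}},C_{\mathrm{hard}})$ with $$C_{\mathrm{soft}}=\{\overline x_i: x_i\in t_{\vec x}\}\cup\{x_i:\overline x_i\in t_{\vec x}\}\quad(\text{unit clauses}),$$ $$C_{\mathrm{hard}}=\{(\overline y_i\vee c_{\mid\vec x}): i\in[m],\ c\in\mathrm{CNF}(T_i)\}\cup \mathrm{CNF}\Big(\sum_{i=1}^m y_i>\frac m2\Big),$$ where $c_{\mid\vec x}=c\cap t_{\vec x}$ is the clause consisting of those literals of $c$ that belong to $t_{\vec x}$, and $\mathrm{CNF}(\sum_{i=1}^m y_i>\frac m2)$ is a CNF encoding of the cardinality constraint $\sum_i y_i>\frac m2$ (over $y_1,\dots,y_m$ and possibly further fresh auxiliary variables, whose projection onto $y_1,\dots,y_m$ is equivalent to the constraint). If $\vec z^*$ is an optimal solution of $(C_{\mathrm{soft}},C_{\mathrm{hard}})$, then the term $t_{\vec x}\cap t_{\vec z^*}$ (the set of literals of $t_{\vec x}$ that are true under $\vec z^*$) is a minimal majoritary reason for $\vec x$ given $F$.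
   Context: A (Boolean) decision tree on $X_n=\{x_1,\dots,x_n\}$ is a binary tree whose internal nodes are labeled by variables of $X_n$ (each variable occurring at most once on any root-to-leaf path) and whose leaves are labeled $0$ or $1$; its value $T(\vec x)$ is the label of the leaf reached by going left (resp. right) at a node labeled $x_i$ when $x_i=0$ (resp. $1$). $\mathrm{CNF}(T)$ is the CNF formula whose clauses are the negations of the terms describing the root-to-leaf paths of $T$ ending in a $0$-leaf; it is equivalent to $T$. A random forest $F=\{T_1,\dots,T_m\}$ has value $F(\vec x)=1$ iff $\frac1m\sum_i T_i(\vec x)>\frac12$. $[m]=\{1,\dots,m\}$. For an assignment $\vec z$, $t_{\vec z}=\bigwedge_i x_i^{z_i}$ with $x_i^1=x_i$, $x_i^0=\overline x_i$ (terms are treated as sets of literals). A term $t$ covers $\vec x$ if $t\subseteq t_{\vec x}$; an implicant of a Boolean function $f$ is a term $t$ with $f(\vec z)=1$ for all $\vec z$ covered by $t$. A majoritary reason for $\vec x$ given $F$ (with $F(\vec x)=1$) is a term $t$ covering $\vec x$ that is an implicant of at least $\lfloor m/2\rfloor+1$ trees $T_i$, and such that for every $l\in t$, $t\setminus\{l\}$ is not; a minimal majoritary reason is one of minimum size. A Partial MaxSAT instance $(C_{\mathrm{soft}},C_{\mathrm{hard}})$ consists of two finite sets of clauses; an optimal solution is an assignment satisfying all clauses of $C_{\mathrm{hard}}$ and maximizing the number of satisfied clauses of $C_{\mathrm{soft}}$. *)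

theory Defs
  imports Main
begin

text \<open>Variables x_1..x_n of X_n are represented by indices i < n (0-based).
  A literal is a pair (i, b) meaning x_i^b (b = True: x_i, b = False: negated x_i). Instances / assignments are functions nat => bool
  (only values at indices < n are relevant).\<close>

type_synonym lit = "nat \<times> bool"

definition neg_lit :: "lit \<Rightarrow> lit" where
  "neg_lit l = (fst l, \<not> snd l)"

definition term_of :: "nat \<Rightarrow> (nat \<Rightarrow> bool) \<Rightarrow> lit set" where
  "term_of n z = {(i, z i) | i. i < n}"

definition covers :: "nat \<Rightarrow> lit set \<Rightarrow> (nat \<Rightarrow> bool) \<Rightarrow> bool" where
  "covers n t z \<longleftrightarrow> t \<subseteq> term_of n z"

definition implicant :: "nat \<Rightarrow> lit set \<Rightarrow> ((nat \<Rightarrow> bool) \<Rightarrow> bool) \<Rightarrow> bool" where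
  "implicant n t f \<longleftrightarrow> (\<forall>z. covers n t z \<longrightarrow> f z)"

datatype dt = Leaf bool | Node nat dt dt

fun dt_eval :: "dt \<Rightarrow> (nat \<Rightarrow> bool) \<Rightarrow> bool" where
  "dt_eval (Leaf b) x = b"
| "dt_eval (Node i l r) x = (if x i then dt_eval r x else dt_eval l x)"

fun dt_vars :: "dt \<Rightarrow> nat set" where
  "dt_vars (Leaf b) = {}"
| "dt_vars (Node i l r) = insert i (dt_vars l \<union> dt_vars r)"

fun wf_dt :: "nat \<Rightarrow> dt \<Rightarrow> bool" where
  "wf_dt n (Leaf b) = True"
| "wf_dt n (Node i l r) = (i < n \<and> i \<notin> dt_vars l \<and> i \<notin> dt_vars r \<and> wf_dt n l \<and> wf_dt n r)"

fun zero_paths :: "dt \<Rightarrow> lit set set" where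
  "zero_paths (Leaf b) = (if b then {} else {{}})"
| "zero_paths (Node i l r) =
     (insert (i, False)) ` zero_paths l \<union> (insert (i, True)) ` zero_paths r"

definition dt_cnf :: "dt \<Rightarrow> lit set set" where
  "dt_cnf T = (\<lambda>p. neg_lit ` p) ` zero_paths T"

text \<open>A forest T_1..T_m is a list of trees (T_{i+1} = F ! i).\<close>
definition rf_eval :: "dt list \<Rightarrow> (nat \<Rightarrow> bool) \<Rightarrow> bool" where
  "rf_eval F x \<longleftrightarrow> length F < 2 * card {i. i < length F \<and> dt_eval (F ! i) x}"

definition n_implied :: "nat \<Rightarrow> dt list \<Rightarrow> lit set \<Rightarrow> nat" where
  "n_implied n F t = card {i. i < length F \<and> implicant n t (dt_eval (F ! i))}"

definition majoritary_reason :: "nat \<Rightarrow> dt list \<Rightarrow> (nat \<Rightarrow> bool) \<Rightarrow> lit set \<Rightarrow> bool" where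
  "majoritary_reason n F x t \<longleftrightarrow>
     covers n t x \<and> n_implied n F t \<ge> length F div 2 + 1 \<and>
     (\<forall>l\<in>t. \<not> (n_implied n F (t - {l}) \<ge> length F div 2 + 1))"

definition minimal_majoritary_reason :: "nat \<Rightarrow> dt list \<Rightarrow> (nat \<Rightarrow> bool) \<Rightarrow> lit set \<Rightarrow> bool" where
  "minimal_majoritary_reason n F x t \<longleftrightarrow>
     majoritary_reason n F x t \<and>
     (\<forall>t'. majoritary_reason n F x t' \<longrightarrow> card t \<le> card t')"

text \<open>Variables of the MaxSAT instance: X i (the x_{i+1}), Y j (the y_{j+1}), A a (auxiliary).\<close>
datatype 'a mvar = X nat | Y nat | A 'a

type_synonym 'a mclause = "('a mvar \<times> bool) set"

definition sat_clause :: "('a mvar \<Rightarrow> bool) \<Rightarrow> 'a mclause \<Rightarrow> bool" where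
  "sat_clause \<sigma> c \<longleftrightarrow> (\<exists>(v, b)\<in>c. \<sigma> v = b)"

definition optimal_solution ::
  "'a mclause set \<Rightarrow> 'a mclause set \<Rightarrow> ('a mvar \<Rightarrow> bool) \<Rightarrow> bool" where
  "optimal_solution Soft Hard \<sigma> \<longleftrightarrow>
     (\<forall>c\<in>Hard. sat_clause \<sigma> c) \<and>
     (\<forall>\<sigma>'. (\<forall>c\<in>Hard. sat_clause \<sigma>' c) \<longrightarrow>
            card {c\<in>Soft. sat_clause \<sigma>' c} \<le> card {c\<in>Soft. sat_clause \<sigma> c})"

definition card_encoding :: "nat \<Rightarrow> 'a mclause set \<Rightarrow> bool" where
  "card_encoding m Card \<longleftrightarrow>
     finite Card \<and> (\<forall>c\<in>Card. finite c) \<and>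
     (\<forall>c\<in>Card. \<forall>(v, b)\<in>c. (\<exists>j<m. v = Y j) \<or> (\<exists>a. v = A a)) \<and>
     (\<forall>\<rho> :: nat \<Rightarrow> bool.
        (\<exists>\<sigma>. (\<forall>j<m. \<sigma> (Y j) = \<rho> j) \<and> (\<forall>c\<in>Card. sat_clause \<sigma> c))
        \<longleftrightarrow> m < 2 * card {j. j < m \<and> \<rho> j})"

definition soft_clauses :: "nat \<Rightarrow> (nat \<Rightarrow> bool) \<Rightarrow> 'a mclause set" where
  "soft_clauses n x = {{(X i, \<not> x i)} | i. i < n}"

definition tree_hard_clauses :: "nat \<Rightarrow> dt list \<Rightarrow> (nat \<Rightarrow> bool) \<Rightarrow> 'a mclause set" where
  "tree_hard_clauses n F x =
     {insert (Y j, False) ((\<lambda>(i, b). (X i, b)) ` (c \<inter> term_of n x)) | j c.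
        j < length F \<and> c \<in> dt_cnf (F ! j)}"

definition reason_of :: "nat \<Rightarrow> (nat \<Rightarrow> bool) \<Rightarrow> ('a mvar \<Rightarrow> bool) \<Rightarrow> lit set" where
  "reason_of n x \<sigma> = term_of n x \<inter> term_of n (\<lambda>i. \<sigma> (X i))"

end

theory Submission
  imports Defs
begin

lemma zp_false: "\<not> dt_eval T z \<Longrightarrow> \<exists>p\<in>zero_paths T. \<forall>(i,b)\<in>p. z i = b"
proof (induction T)
  case (Leaf b) then show ?case by auto
next
  case (Node i l r)
  show ?case
  proof (cases "z i")
    case True
    with Node obtain p where "p\<in>zero_paths r" "\<forall>(i,b)\<in>p. z i = b" by auto
    with True show ?thesis by (intro bexI[of _ "insert (i,True) p"]) auto
  next
    case False
    with Node obtain p where "p\<in>zero_paths l" "\<forall>(i,b)\<in>p. z i = b" by auto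
    with False show ?thesis by (intro bexI[of _ "insert (i,False) p"]) auto
  qed
qed

lemma zp_eval: "p \<in> zero_paths T \<Longrightarrow> \<forall>(i,b)\<in>p. z i = b \<Longrightarrow> \<not> dt_eval T z"
proof (induction T arbitrary: p)
  case (Leaf b) then show ?case by (auto split: if_splits)
next
  case (Node i l r)
  from Node.prems(1) consider q where "q \<in> zero_paths l" "p = insert (i,False) q"
    | q where "q \<in> zero_paths r" "p = insert (i,True) q" by auto
  then show ?case
  proof cases
    case 1
    with Node.prems(2) Node.IH(1)[of q] show ?thesis by auto
  next
    case 2
    with Node.prems(2) Node.IH(2)[of q] show ?thesis by auto
  qed
qed

lemma zp_vars: "p \<in> zero_paths T \<Longrightarrow> (i,b) \<in> p \<Longrightarrow> i \<in> dt_vars T"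
  by (induction T arbitrary: p) (auto split: if_splits)

lemma zp_cons: "wf_dt n T \<Longrightarrow> p \<in> zero_paths T \<Longrightarrow> (i,b) \<in> p \<Longrightarrow> (i, \<not>b) \<in> p \<Longrightarrow> False"
proof (induction T arbitrary: p)
  case (Leaf b) then show ?case by (auto split: if_splits)
next
  case (Node k l r)
  from Node.prems(2) show ?case
  proof (auto)
    fix q assume "q \<in> zero_paths l" "p = insert (k,False) q"
    with Node.prems Node.IH(1)[of q] zp_vars[of q l] show False by auto
  next
    fix q assume "q \<in> zero_paths r" "p = insert (k,True) q"
    with Node.prems Node.IH(2)[of q] zp_vars[of q r] show False by auto
  qed
qed

lemma impl_of_paths:
  assumes "\<forall>p\<in>zero_paths T. \<exists>l\<in>p. neg_lit l \<in> t"
  shows "implicant n t (dt_eval T)"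
  unfolding implicant_def
proof (intro allI impI, rule ccontr)
  fix z assume c: "covers n t z" and e: "\<not> dt_eval T z"
  obtain p where p: "p\<in>zero_paths T" "\<forall>(i,b)\<in>p. z i = b" using zp_false[OF e] by blast
  then obtain l where l: "l\<in>p" "neg_lit l \<in> t" using assms by blast
  obtain i b where lib: "l = (i,b)" by (cases l)
  have "(i, \<not>b) \<in> term_of n z" using c l lib unfolding covers_def neg_lit_def by auto
  then have "z i = (\<not>b)" unfolding term_of_def by auto
  with p l lib show False by auto
qed

lemma paths_of_impl:
  assumes wf: "wf_dt n T" and sub: "t \<subseteq> term_of n x" and imp: "implicant n t (dt_eval T)"
  shows "\<forall>p\<in>zero_paths T. \<exists>l\<in>p. neg_lit l \<in> t"
proof (rule ccontr)
  assume "\<not> ?thesis"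
  then obtain p where p: "p \<in> zero_paths T" and nl: "\<forall>l\<in>p. neg_lit l \<notin> t" by blast
  define z where "z = (\<lambda>i. if (i, \<not> x i) \<in> p then \<not> x i else x i)"
  have cov: "covers n t z"
    unfolding covers_def
  proof
    fix l assume "l \<in> t"
    with sub obtain i where i: "i < n" "l = (i, x i)" unfolding term_of_def by auto
    have "(i, \<not> x i) \<notin> p" using nl \<open>l \<in> t\<close> i unfolding neg_lit_def by force
    then show "l \<in> term_of n z" using i unfolding term_of_def z_def by auto
  qed
  have "\<forall>(i,b)\<in>p. z i = b"
  proof (clarify)
    fix i b assume ib: "(i,b) \<in> p"
    show "z i = b"
    proof (cases "b = x i")
      case True
      then have "(i, \<not> x i) \<notin> p" using zp_cons[OF wf p ib] by auto
      then show ?thesis using True unfolding z_def by auto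
    next
      case False
      then show ?thesis using ib unfolding z_def by auto
    qed
  qed
  then have "\<not> dt_eval T z" using zp_eval[OF p] by blast
  with imp cov show False unfolding implicant_def by blast
qed

lemma soft_count:
  "card {c \<in> soft_clauses n x. sat_clause (\<sigma>::'a mvar \<Rightarrow> bool) c} + card (reason_of n x \<sigma>) = n"
proof -
  have e1: "{c \<in> soft_clauses n x. sat_clause \<sigma> c} = (\<lambda>i. {(X i, \<not> x i)}) ` {i. i < n \<and> \<sigma> (X i) \<noteq> x i}"
    unfolding soft_clauses_def sat_clause_def by auto
  have e2: "reason_of n x \<sigma> = (\<lambda>i. (i, x i)) ` {i. i < n \<and> \<sigma> (X i) = x i}"
    unfolding reason_of_def term_of_def by auto
  have c1: "card {c \<in> soft_clauses n x. sat_clause \<sigma> c} = card {i. i < n \<and> \<sigma> (X i) \<noteq> x i}"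
    unfolding e1 by (rule card_image) (auto simp: inj_on_def)
  have c2: "card (reason_of n x \<sigma>) = card {i. i < n \<and> \<sigma> (X i) = x i}"
    unfolding e2 by (rule card_image) (auto simp: inj_on_def)
  have "card {i. i < n \<and> \<sigma> (X i) \<noteq> x i} + card {i. i < n \<and> \<sigma> (X i) = x i}
      = card ({i. i < n \<and> \<sigma> (X i) \<noteq> x i} \<union> {i. i < n \<and> \<sigma> (X i) = x i})"
    by (rule card_Un_disjoint[symmetric]) auto
  also have "{i. i < n \<and> \<sigma> (X i) \<noteq> x i} \<union> {i. i < n \<and> \<sigma> (X i) = x i} = {..<n}" by auto
  finally show ?thesis using c1 c2 by simp
qed

theorem proposition8:
  fixes n :: nat and F :: "dt list" and x :: "nat \<Rightarrow> bool"
    and Card :: "'a mclause set" and z :: "'a mvar \<Rightarrow> bool"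
  assumes "\<forall>T\<in>set F. wf_dt n T"
    and "rf_eval F x"
    and "card_encoding (length F) Card"
    and "optimal_solution (soft_clauses n x) (tree_hard_clauses n F x \<union> Card) z"
  shows "minimal_majoritary_reason n F x (reason_of n x z)"
proof -
  let ?m = "length F"
  let ?R = "reason_of n x z"
  note ce = assms(3)[unfolded card_encoding_def]
  note ce3 = conjunct1[OF conjunct2[OF conjunct2[OF ce]]]
  note ce4 = conjunct2[OF conjunct2[OF conjunct2[OF ce]], rule_format]
  have hard: "\<forall>c\<in>tree_hard_clauses n F x \<union> Card. sat_clause z c"
    using assms(4) unfolding optimal_solution_def by blast
  have Rsub: "?R \<subseteq> term_of n x" unfolding reason_of_def by auto
  have finx: "finite (term_of n x)" unfolding term_of_def by simp
  have finR: "finite ?R" using Rsub finx finite_subset by blast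
  have yimp: "implicant n ?R (dt_eval (F ! j))" if j: "j < ?m" "z (Y j)" for j
  proof (rule impl_of_paths, rule ballI)
    fix p assume p: "p \<in> zero_paths (F ! j)"
    let ?c = "neg_lit ` p"
    have "?c \<in> dt_cnf (F ! j)" using p unfolding dt_cnf_def by auto
    then have "insert (Y j, False) ((\<lambda>(i, b). (X i, b)) ` (?c \<inter> term_of n x)) \<in> tree_hard_clauses n F x"
      using j unfolding tree_hard_clauses_def by blast
    then have "sat_clause z (insert (Y j, False) ((\<lambda>(i, b). (X i, b)) ` (?c \<inter> term_of n x)))"
      using hard by blast
    then obtain i b where ib: "(i,b) \<in> ?c \<inter> term_of n x" "z (X i) = b"
      using j unfolding sat_clause_def by auto
    then obtain l where l: "l \<in> p" "neg_lit l = (i,b)" by auto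
    have "(i,b) \<in> ?R" using ib unfolding reason_of_def term_of_def by auto
    with l show "\<exists>l\<in>p. neg_lit l \<in> ?R" by metis
  qed
  have "\<exists>\<sigma>. (\<forall>j<?m. \<sigma> (Y j) = z (Y j)) \<and> (\<forall>c\<in>Card. sat_clause \<sigma> c)"
    using hard by (intro exI[of _ z]) auto
  then have lt: "?m < 2 * card {j. j < ?m \<and> z (Y j)}" using ce4[of "\<lambda>j. z (Y j)"] by simp
  have "card {j. j < ?m \<and> z (Y j)} \<le> n_implied n F ?R"
    unfolding n_implied_def by (rule card_mono) (auto intro: yimp)
  with lt have Rimp: "n_implied n F ?R \<ge> ?m div 2 + 1" by linarith
  have gen: "card ?R \<le> card t'" if t': "t' \<subseteq> term_of n x" "n_implied n F t' \<ge> ?m div 2 + 1" for t'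
  proof -
    define \<rho> where "\<rho> = (\<lambda>j. implicant n t' (dt_eval (F ! j)))"
    have "?m < 2 * card {j. j < ?m \<and> \<rho> j}" using t'(2) unfolding n_implied_def \<rho>_def by linarith
    then obtain \<sigma>0 where s0: "\<forall>j<?m. \<sigma>0 (Y j) = \<rho> j" "\<forall>c\<in>Card. sat_clause \<sigma>0 c"
      using ce4[of \<rho>] by blast
    define \<sigma> where "\<sigma> = (\<lambda>v. case v of X i \<Rightarrow> (if (i, x i) \<in> t' then x i else \<not> x i) | _ \<Rightarrow> \<sigma>0 v)"
    have hc: "sat_clause \<sigma> c" if c: "c \<in> Card" for c
    proof -
      obtain v b where vb: "(v,b) \<in> c" "\<sigma>0 v = b" using s0(2) c unfolding sat_clause_def by auto
      have "(\<exists>j<?m. v = Y j) \<or> (\<exists>a. v = A a)" using ce3 c vb(1) by blast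
      then have "\<sigma> v = \<sigma>0 v" unfolding \<sigma>_def by auto
      then show ?thesis using vb unfolding sat_clause_def by auto
    qed
    have ht: "sat_clause \<sigma> c" if c: "c \<in> tree_hard_clauses n F x" for c
    proof -
      obtain j cc where jc: "c = insert (Y j, False) ((\<lambda>(i, b). (X i, b)) ` (cc \<inter> term_of n x))"
        "j < ?m" "cc \<in> dt_cnf (F ! j)" using c unfolding tree_hard_clauses_def by blast
      show ?thesis
      proof (cases "\<sigma> (Y j)")
        case False then show ?thesis using jc unfolding sat_clause_def by auto
      next
        case True
        then have "\<rho> j" using s0(1) jc(2) unfolding \<sigma>_def by auto
        then have imp: "implicant n t' (dt_eval (F ! j))" unfolding \<rho>_def .
        have wf: "wf_dt n (F ! j)" using assms(1) jc(2) by auto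
        obtain p where p: "p \<in> zero_paths (F ! j)" "cc = neg_lit ` p" using jc(3) unfolding dt_cnf_def by auto
        obtain l where l: "l \<in> p" "neg_lit l \<in> t'" using paths_of_impl[OF wf t'(1) imp] p(1) by blast
        obtain i where i: "i < n" "neg_lit l = (i, x i)" using l(2) t'(1) unfolding term_of_def by auto
        have "(i, x i) \<in> cc" using i(2) l(1) p(2) by (metis image_eqI)
        moreover have "(i, x i) \<in> term_of n x" using i(1) unfolding term_of_def by blast
        ultimately have "(i, x i) \<in> cc \<inter> term_of n x" by blast
        then have "(X i, x i) \<in> c" using jc(1) by force
        moreover have "\<sigma> (X i) = x i" using l(2) i unfolding \<sigma>_def by auto
        ultimately show ?thesis unfolding sat_clause_def by auto
      qed
    qed
    have "\<forall>c\<in>tree_hard_clauses n F x \<union> Card. sat_clause \<sigma> c" using hc ht by blast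
    then have le: "card {c \<in> soft_clauses n x. sat_clause \<sigma> c} \<le> card {c \<in> soft_clauses n x. sat_clause z c}"
      using assms(4) unfolding optimal_solution_def by blast
    have "reason_of n x \<sigma> = t'"
      using t'(1) unfolding reason_of_def term_of_def \<sigma>_def by auto
    then show ?thesis using le soft_count[of n x \<sigma>] soft_count[of n x z] by simp
  qed
  have mr: "majoritary_reason n F x ?R"
    unfolding majoritary_reason_def
  proof (intro conjI ballI)
    show "covers n ?R x" unfolding covers_def using Rsub .
    show "n_implied n F ?R \<ge> ?m div 2 + 1" using Rimp .
  next
    fix l assume l: "l \<in> ?R"
    show "\<not> (n_implied n F (?R - {l}) \<ge> ?m div 2 + 1)"
    proof
      assume "n_implied n F (?R - {l}) \<ge> ?m div 2 + 1"
      then have "card ?R \<le> card (?R - {l})" using gen[of "?R - {l}"] Rsub by blast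
      moreover have "card (?R - {l}) < card ?R" using finR l by (rule card_Diff1_less)
      ultimately show False by simp
    qed
  qed
  show ?thesis
    unfolding minimal_majoritary_reason_def
  proof (intro conjI allI impI)
    show "majoritary_reason n F x ?R" using mr .
  next
    fix t' assume "majoritary_reason n F x t'"
    then show "card ?R \<le> card t'" using gen unfolding majoritary_reason_def covers_def by blast
  qed
qed

end
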